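(* Let $X$ be a topological space possessing an infinite metrizable gauge, let $\kappa$ be a regular cardinal with $\kappa\in\mathrm{MG}(X)$, let $G\in\mathcal{G}_\kappa$ and $d\in\mathrm{Met}(X;G)$. Then $\lambda_G\circ d\in\mathrm{Ult}(X;\mathrm{Arc}(G)^\perp)$, and $d$ and $\lambda_G\circ d$ are uniformly equivalent to each other.
   Context: A linearly ordered Abelian group is an Abelian group with a linear order compatible with addition. For $x,y\in G_{>0}$, $x\asymp y$ iff $y\le nx$ and $x\le my$ for some $n,m\in\mathbb{Z}_{\ge1}$; $\mathrm{Arc}(G)=G_{>0}/\asymp$, ordered by $[x]\preceq[y]$ iff ($nx<y$ for all $n$) or $x\asymp y$; $\mathrm{Arc}(G)^\perp$ is $\mathrm{Arc}(G)$ with a new least element $\perp$ adjoined. $\mathrm{abs}(x)=x$ for $x\ge 0$, $-x$ otherwise; $\lambda_G(x)=[\mathrm{abs}(x)]$ for $x\ne0$, $\lambda_G(0)=\perp$. For a bottomed linearly ordered set $S$ (least element $\perp_S$, $S^*=S\setminus\{\perp_S\}$), $\chi(S)$ is the least cardinal $\kappa>0$ such that some strictly decreasing family $(s_\alpha)_{\alpha<\kappa}$ in $S^*$ has every $t\in S^*$ bounded below by some $s_\alpha$. A $G$-metric: $d\colon X^2\to G$, $d(x,y)=0\iff x=y$, $d\ge0$, symmetric, triangle inequality. An $S$-ultrametric: $d\colon X^2\to S$, $d(x,y)=\perp_S\iff x=y$, symmetric, $d(x,y)\le\max\{d(x,z),d(z,y)\}$. Topologies via open balls of radii in $G_{>0}$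 (resp. $S^*$); $\mathrm{Met}(X;G)$, $\mathrm{Ult}(X;S)$ are those generating the topology of $X$. $\mathrm{MG}(X)$: cardinals $\kappa$ with some $G$, $\chi(\mathrm{Arc}(G)^\perp)=\kappa$, $\mathrm{Met}(X;G)\ne\emptyset$; infinite metrizable gauge: some $\kappa\in\mathrm{MG}(X)$ with $\kappa\ge\omega_0$. $\mathcal{G}_\kappa$: groups with $\chi(\mathrm{Arc}(G)^\perp)=\kappa$. Two such (ultra)metrics $d,e$ on $X$ are uniformly equivalent if for every admissible radius $\epsilon$ for $e$ there is an admissible $\delta$ for $d$ with $d(x,y)<\delta\Rightarrow e(x,y)<\epsilon$, and vice versa. *)

theory Defs
  imports "HOL-Analysis.Analysis"
begin

fun gmul :: "nat \<Rightarrow> 'g::linordered_ab_group_add \<Rightarrow> 'g" where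
  "gmul 0 x = 0"
| "gmul (Suc n) x = x + gmul n x"

definition gabs :: "'g::linordered_ab_group_add \<Rightarrow> 'g" where
  "gabs x = (if 0 \<le> x then x else - x)"

definition arch_eqv :: "'g::linordered_ab_group_add \<Rightarrow> 'g \<Rightarrow> bool" where
  "arch_eqv x y \<longleftrightarrow> 0 < x \<and> 0 < y \<and>
     (\<exists>n\<ge>1. y \<le> gmul n x) \<and> (\<exists>m\<ge>1. x \<le> gmul m y)"

definition arc_class :: "'g::linordered_ab_group_add \<Rightarrow> 'g set" where
  "arc_class x = {y. arch_eqv x y}"

text \<open>Arc(G)^perp: the classes [x] (x > 0) together with a new least element,
  represented by the set {0} (distinct from every class, which consists of
  positive elements).\<close>
definition arc_bot_elem :: "'g::linordered_ab_group_add set" where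
  "arc_bot_elem = {0}"

definition ArcBot :: "'g::linordered_ab_group_add set set" where
  "ArcBot = insert arc_bot_elem {arc_class x | x. 0 < x}"

definition arc_le :: "'g::linordered_ab_group_add set \<Rightarrow> 'g set \<Rightarrow> bool" where
  "arc_le A B \<longleftrightarrow> A = arc_bot_elem \<or>
     (\<exists>x y. 0 < x \<and> 0 < y \<and> A = arc_class x \<and> B = arc_class y \<and>
        ((\<forall>n\<ge>1. gmul n x < y) \<or> arch_eqv x y))"

definition lam :: "'g::linordered_ab_group_add \<Rightarrow> 'g set" where
  "lam x = (if x = 0 then arc_bot_elem else arc_class (gabs x))"

definition strict :: "('b \<Rightarrow> 'b \<Rightarrow> bool) \<Rightarrow> 'b \<Rightarrow> 'b \<Rightarrow> bool" where
  "strict le a b \<longleftrightarrow> le a b \<and> a \<noteq> b"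

definition omax :: "('b \<Rightarrow> 'b \<Rightarrow> bool) \<Rightarrow> 'b \<Rightarrow> 'b \<Rightarrow> 'b" where
  "omax le a b = (if le a b then b else a)"

definition dec_coinitial ::
  "'b set \<Rightarrow> ('b \<Rightarrow> 'b \<Rightarrow> bool) \<Rightarrow> 'b \<Rightarrow> 'k rel \<Rightarrow> ('k \<Rightarrow> 'b) \<Rightarrow> bool" where
  "dec_coinitial S le bt r s \<longleftrightarrow>
     (\<forall>\<alpha>\<in>Field r. s \<alpha> \<in> S - {bt}) \<and>
     (\<forall>\<alpha> \<beta>. (\<alpha>, \<beta>) \<in> r \<and> \<alpha> \<noteq> \<beta> \<longrightarrow> strict le (s \<beta>) (s \<alpha>)) \<and>
     (\<forall>t\<in>S - {bt}. \<exists>\<alpha>\<in>Field r. le (s \<alpha>) t)"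

text \<open>chi(S) = |r|: r is a nonzero cardinal admitting such a family, and no
  nonzero smaller cardinal does (all cardinals below |r| are representable on
  the same type as r).\<close>
definition chi_is ::
  "'b set \<Rightarrow> ('b \<Rightarrow> 'b \<Rightarrow> bool) \<Rightarrow> 'b \<Rightarrow> 'k rel \<Rightarrow> bool" where
  "chi_is S le bt r \<longleftrightarrow>
     Card_order r \<and> Field r \<noteq> {} \<and> (\<exists>s. dec_coinitial S le bt r s) \<and>
     (\<forall>r'::'k rel. Card_order r' \<and> Field r' \<noteq> {} \<and> (r', r) \<in> ordLess \<longrightarrow>
        \<not> (\<exists>s. dec_coinitial S le bt r' s))"

abbreviation chi_arc :: "'g::linordered_ab_group_add itself \<Rightarrow> 'k rel \<Rightarrow> bool" where
  "chi_arc TYPE('g) r \<equiv> chi_is (ArcBot :: 'g set set) arc_le arc_bot_elem r"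

definition generates_topology ::
  "'a topology \<Rightarrow> ('a \<Rightarrow> 'r \<Rightarrow> 'a set) \<Rightarrow> 'r set \<Rightarrow> bool" where
  "generates_topology X B R \<longleftrightarrow>
     (\<forall>U. openin X U \<longleftrightarrow> U \<subseteq> topspace X \<and> (\<forall>x\<in>U. \<exists>r\<in>R. B x r \<subseteq> U))"

definition is_gmetric :: "'a set \<Rightarrow> ('a \<Rightarrow> 'a \<Rightarrow> 'g::linordered_ab_group_add) \<Rightarrow> bool" where
  "is_gmetric M d \<longleftrightarrow>
     (\<forall>x\<in>M. \<forall>y\<in>M. (d x y = 0 \<longleftrightarrow> x = y) \<and> 0 \<le> d x y \<and> d x y = d y x) \<and>
     (\<forall>x\<in>M. \<forall>y\<in>M. \<forall>z\<in>M. d x y \<le> d x z + d z y)"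

definition Met :: "'a topology \<Rightarrow> ('a \<Rightarrow> 'a \<Rightarrow> 'g::linordered_ab_group_add) set" where
  "Met X = {d. is_gmetric (topspace X) d \<and>
     generates_topology X (\<lambda>x r. {y\<in>topspace X. d x y < r}) {r. 0 < r}}"

definition is_ultrametric ::
  "'a set \<Rightarrow> 'b set \<Rightarrow> ('b \<Rightarrow> 'b \<Rightarrow> bool) \<Rightarrow> 'b \<Rightarrow> ('a \<Rightarrow> 'a \<Rightarrow> 'b) \<Rightarrow> bool" where
  "is_ultrametric M S le bt e \<longleftrightarrow>
     (\<forall>x\<in>M. \<forall>y\<in>M. e x y \<in> S \<and> (e x y = bt \<longleftrightarrow> x = y) \<and> e x y = e y x) \<and>
     (\<forall>x\<in>M. \<forall>y\<in>M. \<forall>z\<in>M. le (e x y) (omax le (e x z) (e z y)))"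

definition Ult ::
  "'a topology \<Rightarrow> 'b set \<Rightarrow> ('b \<Rightarrow> 'b \<Rightarrow> bool) \<Rightarrow> 'b \<Rightarrow> ('a \<Rightarrow> 'a \<Rightarrow> 'b) set" where
  "Ult X S le bt = {e. is_ultrametric (topspace X) S le bt e \<and>
     generates_topology X (\<lambda>x r. {y\<in>topspace X. strict le (e x y) r}) (S - {bt})}"

definition unif_equiv_arc ::
  "'a topology \<Rightarrow> ('a \<Rightarrow> 'a \<Rightarrow> 'g::linordered_ab_group_add) \<Rightarrow> ('a \<Rightarrow> 'a \<Rightarrow> 'g set) \<Rightarrow> bool" where
  "unif_equiv_arc X d e \<longleftrightarrow>
     (\<forall>\<epsilon>\<in>ArcBot - {arc_bot_elem}. \<exists>\<delta>>0. \<forall>x\<in>topspace X. \<forall>y\<in>topspace X.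
        d x y < \<delta> \<longrightarrow> strict arc_le (e x y) \<epsilon>) \<and>
     (\<forall>\<epsilon>>0. \<exists>\<delta>\<in>ArcBot - {arc_bot_elem}. \<forall>x\<in>topspace X. \<forall>y\<in>topspace X.
        strict arc_le (e x y) \<delta> \<longrightarrow> d x y < \<epsilon>)"

end

theory Submission
  imports Defs
begin

lemma gmul_plus: "gmul (a + b) x = gmul a x + gmul b x"
  by (induction a) (auto simp: add.assoc)

lemma gmul_add: "gmul n (x + y) = gmul n x + gmul n y"
  by (induction n) (auto simp: algebra_simps)

lemma gmul_mult: "gmul (m * n) x = gmul m (gmul n x)"
proof (induction m)
  case 0 then show ?case by simp
next
  case (Suc m) then show ?case by (simp add: gmul_plus)
qed

lemma gmul_mono: "x \<le> y \<Longrightarrow> gmul n x \<le> gmul n y"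
  by (induction n) (auto intro: add_mono)

lemma gmul_nonneg: "0 \<le> x \<Longrightarrow> 0 \<le> gmul n x"
  by (induction n) (auto intro: add_nonneg_nonneg)

lemma gmul_zero[simp]: "gmul n (0::'g::linordered_ab_group_add) = 0"
  by (induction n) auto

lemma gmul_one[simp]: "gmul (Suc 0) x = x"
  by simp

lemma gmul_ge: "0 \<le> x \<Longrightarrow> n \<ge> 1 \<Longrightarrow> x \<le> gmul n x"
proof (induction n)
  case 0 then show ?case by simp
next
  case (Suc n) then show ?case using gmul_nonneg[of x n] by simp
qed

definition lsim :: "'g::linordered_ab_group_add \<Rightarrow> 'g \<Rightarrow> bool" where
  "lsim x y \<longleftrightarrow> (\<exists>n\<ge>1. x \<le> gmul n y)"

lemma lsim_refl: "lsim x x"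
  unfolding lsim_def by (rule exI[of _ 1]) simp

lemma lsim_le: "x \<le> y \<Longrightarrow> lsim x y"
  unfolding lsim_def by (rule exI[of _ 1]) simp

lemma lsim_trans: "lsim x y \<Longrightarrow> lsim y z \<Longrightarrow> lsim x z"
proof -
  assume "lsim x y" "lsim y z"
  then obtain n m where n: "n \<ge> 1" "x \<le> gmul n y" and m: "m \<ge> 1" "y \<le> gmul m z"
    unfolding lsim_def by blast
  have "x \<le> gmul n (gmul m z)" using n(2) gmul_mono[OF m(2), of n] by simp
  also have "\<dots> = gmul (n * m) z" by (simp add: gmul_mult)
  finally have xz: "x \<le> gmul (n * m) z" .
  have "1 * 1 \<le> n * m" by (rule mult_le_mono[OF n(1) m(1)])
  then have "1 \<le> n * m" by simp
  then have "1 \<le> n * m \<and> x \<le> gmul (n * m) z" using xz by (rule conjI)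
  then show "lsim x z" unfolding lsim_def by (rule exI)
qed

lemma lsim_total: "lsim x y \<or> lsim y x"
proof (cases "x \<le> y")
  case True then show ?thesis by (rule disjI1[OF lsim_le])
next
  case False then have "y \<le> x" by simp
  then show ?thesis by (rule disjI2[OF lsim_le])
qed

lemma lsim_pos: "lsim x y \<Longrightarrow> 0 < x \<Longrightarrow> 0 < y"
proof (rule ccontr)
  assume "lsim x y" "0 < x" "\<not> 0 < y"
  then obtain n where "x \<le> gmul n y" unfolding lsim_def by blast
  moreover have "gmul n y \<le> 0" using gmul_mono[of y 0 n] \<open>\<not> 0 < y\<close> by simp
  ultimately show False using \<open>0 < x\<close> by simp
qed

lemma arch_eqv_lsim: "arch_eqv x y \<longleftrightarrow> 0 < x \<and> 0 < y \<and> lsim x y \<and> lsim y x"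
  unfolding arch_eqv_def lsim_def by blast

lemma lam_pos: assumes "0 < v" shows "lam v = arc_class v"
proof -
  have "v \<noteq> 0" "0 \<le> v" using assms by auto
  then show ?thesis unfolding lam_def gabs_def by simp
qed

lemma arc_class_mem: "0 < v \<Longrightarrow> v \<in> arc_class v"
  unfolding arc_class_def arch_eqv_lsim using lsim_refl by blast

lemma arc_class_ne_bot: assumes "0 < v" shows "arc_class v \<noteq> arc_bot_elem"
proof
  assume "arc_class v = arc_bot_elem"
  then have "v \<in> arc_bot_elem" using arc_class_mem[OF assms] by simp
  then have "v = 0" unfolding arc_bot_elem_def by simp
  then show False using assms by simp
qed

lemma lam_zero: "lam 0 = arc_bot_elem"
  unfolding lam_def by simp

lemma lam_eq_iff:
  assumes "0 \<le> u" "0 \<le> v"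
  shows "lam u = lam v \<longleftrightarrow> lsim u v \<and> lsim v u"
proof (cases "u = 0")
  case True
  show ?thesis
  proof (cases "v = 0")
    case True with \<open>u = 0\<close> show ?thesis using lsim_refl by simp
  next
    case False
    then have "0 < v" using assms by simp
    then have "\<not> lsim v u" using lsim_pos[of v u] \<open>u = 0\<close> \<open>0 < v\<close> by blast
    moreover have "lam u \<noteq> lam v"
    proof -
      have "lam u = arc_bot_elem" using \<open>u = 0\<close> by (simp add: lam_zero)
      then show ?thesis using lam_pos[OF \<open>0 < v\<close>] arc_class_ne_bot[OF \<open>0 < v\<close>] by simp
    qed
    ultimately show ?thesis by blast
  qed
next
  case False
  then have u: "0 < u" using assms by simp
  show ?thesis
  proof (cases "v = 0")
    case True
    then have "\<not> lsim u v" using lsim_pos[of u v] u by blast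
    moreover have "lam u \<noteq> lam v"
    proof -
      have "lam v = arc_bot_elem" using \<open>v = 0\<close> by (simp add: lam_zero)
      then show ?thesis using lam_pos[OF u] arc_class_ne_bot[OF u] by simp
    qed
    ultimately show ?thesis by blast
  next
    case False
    then have v: "0 < v" using assms by simp
    show ?thesis
    proof
      assume "lam u = lam v"
      then have "v \<in> arc_class u" using arc_class_mem[OF v] lam_pos[OF u] lam_pos[OF v] by simp
      then show "lsim u v \<and> lsim v u" unfolding arc_class_def arch_eqv_lsim by simp
    next
      assume h: "lsim u v \<and> lsim v u"
      have "arch_eqv u z \<longleftrightarrow> arch_eqv v z" for z
      proof -
        have h1: "lsim u v" and h2: "lsim v u" using h by auto
        have t1: "lsim u z \<Longrightarrow> lsim v z" by (rule lsim_trans[OF h2])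
        have t2: "lsim v z \<Longrightarrow> lsim u z" by (rule lsim_trans[OF h1])
        have t3: "lsim z u \<Longrightarrow> lsim z v" by (erule lsim_trans[OF _ h1])
        have t4: "lsim z v \<Longrightarrow> lsim z u" by (erule lsim_trans[OF _ h2])
        show ?thesis unfolding arch_eqv_lsim using u v t1 t2 t3 t4 by auto
      qed
      then have "arch_eqv u = arch_eqv v" by (intro ext)
      then have "arc_class u = arc_class v"
        unfolding arc_class_def by simp
      then show "lam u = lam v" using lam_pos[OF u] lam_pos[OF v] by simp
    qed
  qed
qed

lemma arc_le_lam:
  assumes "0 \<le> u" "0 \<le> v"
  shows "arc_le (lam u) (lam v) \<longleftrightarrow> lsim u v"
proof
  assume "arc_le (lam u) (lam v)"
  then consider "lam u = arc_bot_elem" | x y where "0 < x" "0 < y" "lam u = arc_class x"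
      "lam v = arc_class y" "(\<forall>n\<ge>1. gmul n x < y) \<or> arch_eqv x y"
    unfolding arc_le_def by blast
  then show "lsim u v"
  proof cases
    case 1
    then have "lam u = lam 0" by (simp add: lam_zero)
    then have "lsim u 0" using lam_eq_iff[OF assms(1) order_refl] by blast
    then have "\<not> 0 < u" using lsim_pos[of u 0] by blast
    then have "u \<le> v" using assms by simp
    then show ?thesis by (rule lsim_le)
  next
    case 2
    have "lam u = lam x" "lam v = lam y" using 2 lam_pos[OF 2(1)] lam_pos[OF 2(2)] by auto
    have x0: "0 \<le> x" and y0: "0 \<le> y" using 2 by auto
    have ux: "lsim u x" using lam_eq_iff[OF assms(1) x0] \<open>lam u = lam x\<close> by blast
    have yv: "lsim y v" using lam_eq_iff[OF assms(2) y0] \<open>lam v = lam y\<close> by blast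
    have "lsim x y"
      using 2(5) unfolding arch_eqv_lsim
    proof (elim disjE)
      assume "\<forall>n\<ge>1. gmul n x < y"
      then have "gmul 1 x < y" by blast
      then show "lsim x y" by (intro lsim_le) simp
    qed simp
    then have "lsim u y" using ux by (intro lsim_trans[of u x y])
    then show ?thesis using yv by (intro lsim_trans[of u y v])
  qed
next
  assume h: "lsim u v"
  show "arc_le (lam u) (lam v)"
  proof (cases "u = 0")
    case True show ?thesis unfolding arc_le_def by (rule disjI1) (simp add: True lam_zero)
  next
    case False
    then have u: "0 < u" using assms by simp
    then have v: "0 < v" using lsim_pos[OF h] by blast
    have c: "(\<forall>n\<ge>1. gmul n u < v) \<or> arch_eqv u v"
    proof (cases "lsim v u")
      case True then show ?thesis unfolding arch_eqv_lsim using u v h by simp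
    next
      case False
      have "gmul n u < v" if "n \<ge> 1" for n
      proof (rule ccontr)
        assume "\<not> gmul n u < v"
        then have "v \<le> gmul n u" by simp
        then have "lsim v u" unfolding lsim_def using that by blast
        then show False using False by contradiction
      qed
      then show ?thesis by blast
    qed
    have lu: "lam u = arc_class u" by (rule lam_pos[OF u])
    have lv: "lam v = arc_class v" by (rule lam_pos[OF v])
    show ?thesis unfolding arc_le_def
      apply (rule disjI2)
      apply (rule exI[of _ u])
      apply (rule exI[of _ v])
      using u v lu lv c by simp
  qed
qed

lemma strict_lam:
  assumes "0 \<le> u" "0 \<le> v"
  shows "strict arc_le (lam u) (lam v) \<longleftrightarrow> \<not> lsim v u"
  unfolding strict_def arc_le_lam[OF assms] lam_eq_iff[OF assms] using lsim_total[of u v] by blast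

lemma ArcBot_lam: "t \<in> ArcBot \<Longrightarrow> \<exists>v\<ge>0. t = lam v"
  unfolding ArcBot_def using lam_zero lam_pos by (auto intro: less_imp_le)

lemma ArcBot_lam_pos: "t \<in> ArcBot - {arc_bot_elem} \<Longrightarrow> \<exists>v>0. t = lam v"
  unfolding ArcBot_def using lam_pos by fastforce

lemma lam_in_ArcBot: "0 \<le> v \<Longrightarrow> lam v \<in> ArcBot"
  unfolding ArcBot_def lam_def gabs_def by auto

lemma lam_in_ArcBot_pos: "0 < v \<Longrightarrow> lam v \<in> ArcBot - {arc_bot_elem}"
  using lam_in_ArcBot[of v] lam_pos[of v] arc_class_ne_bot[of v] by auto

lemma no_min_class:
  fixes \<kappa> :: "'k rel"
  assumes G: "chi_arc TYPE('g::linordered_ab_group_add) \<kappa>" and inf: "Cinfinite \<kappa>"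
    and r: "0 < (r::'g)"
  shows "\<exists>\<delta>>0. \<not> lsim r \<delta>"
proof (rule ccontr)
  assume "\<not> ?thesis"
  then have all: "\<And>\<delta>. 0 < \<delta> \<Longrightarrow> lsim r \<delta>" by blast
  define a :: 'k where "a = undefined"
  define r' where "r' = card_of {a}"
  have F: "Field r' = {a}" unfolding r'_def by (rule Field_card_of)
  have co: "Card_order r'" unfolding r'_def by (rule card_of_Card_order)
  have less: "(r', \<kappa>) \<in> ordLess"
    using finite_ordLess_infinite[of r' \<kappa>] F co inf
    by (simp add: card_order_on_well_order_on cinfinite_def)
  have "dec_coinitial (ArcBot :: 'g set set) arc_le arc_bot_elem r' (\<lambda>_. lam r)"
    unfolding dec_coinitial_def
  proof (intro conjI ballI allI impI)
    show "lam r \<in> ArcBot - {arc_bot_elem}" for \<alpha> using lam_in_ArcBot_pos r by blast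
  next
    fix \<alpha> \<beta> assume "(\<alpha>, \<beta>) \<in> r' \<and> \<alpha> \<noteq> \<beta>"
    then have "\<alpha> \<in> Field r'" "\<beta> \<in> Field r'" "\<alpha> \<noteq> \<beta>" by (auto intro: FieldI1 FieldI2)
    then have False using F by simp
    then show "strict arc_le (lam r) (lam r)" by blast
  next
    fix t :: "'g set" assume "t \<in> ArcBot - {arc_bot_elem}"
    then obtain v where v: "0 < v" "t = lam v" using ArcBot_lam_pos by blast
    then have "arc_le (lam r) t" using arc_le_lam[of r v] all[of v] r by simp
    then show "\<exists>\<alpha>\<in>Field r'. arc_le (lam r) t" using F by auto
  qed
  then have ex: "\<exists>s. dec_coinitial (ArcBot :: 'g set set) arc_le arc_bot_elem r' s" by blast
  have "\<forall>r''::'k rel. Card_order r'' \<and> Field r'' \<noteq> {} \<and> (r'', \<kappa>) \<in> ordLess \<longrightarrow>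
        \<not> (\<exists>s. dec_coinitial (ArcBot :: 'g set set) arc_le arc_bot_elem r'' s)"
    using G unfolding chi_is_def by (elim conjE)
  then have "\<not> (\<exists>s. dec_coinitial (ArcBot :: 'g set set) arc_le arc_bot_elem r' s)"
    using co F less by simp
  then show False using ex by contradiction
qed

lemma small_lem: "0 \<le> u \<Longrightarrow> u < \<delta> \<Longrightarrow> \<not> lsim r \<delta> \<Longrightarrow> \<not> lsim r u"
proof
  assume "u < \<delta>" "\<not> lsim r \<delta>" "lsim r u"
  then have "lsim u \<delta>" by (intro lsim_le) simp
  with \<open>lsim r u\<close> have "lsim r \<delta>" by (rule lsim_trans)
  with \<open>\<not> lsim r \<delta>\<close> show False by contradiction
qed

lemma big_lem: "\<not> lsim r u \<Longrightarrow> u < r"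
proof (rule ccontr)
  assume "\<not> lsim r u" "\<not> u < r"
  then have "r \<le> u" by simp
  then have "lsim r u" by (rule lsim_le)
  with \<open>\<not> lsim r u\<close> show False by contradiction
qed

theorem lemma2p35:
  fixes X :: "'a topology"
    and \<kappa> :: "'k rel"
    and d :: "'a \<Rightarrow> 'a \<Rightarrow> 'g::linordered_ab_group_add"
  assumes gauge: "\<exists>(\<mu>::'k2 rel) (e::'a \<Rightarrow> 'a \<Rightarrow> 'h::linordered_ab_group_add).
                    chi_arc TYPE('h) \<mu> \<and> \<not> finite (Field \<mu>) \<and> e \<in> Met X"
    and regular: "Cinfinite \<kappa>" "regularCard \<kappa>"
    and inMG: "\<exists>e::'a \<Rightarrow> 'a \<Rightarrow> 'm::linordered_ab_group_add.
                 chi_arc TYPE('m) \<kappa> \<and> e \<in> Met X"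
    and G: "chi_arc TYPE('g) \<kappa>"
    and d: "d \<in> Met X"
  shows "(\<lambda>x y. lam (d x y)) \<in> Ult X ArcBot arc_le arc_bot_elem
         \<and> unif_equiv_arc X d (\<lambda>x y. lam (d x y))"
proof -
  let ?M = "topspace X"
  have gm: "is_gmetric ?M d" and gt: "generates_topology X (\<lambda>x r. {y\<in>?M. d x y < r}) {r. 0 < r}"
    using d unfolding Met_def by auto
  have nn: "\<And>x y. x \<in> ?M \<Longrightarrow> y \<in> ?M \<Longrightarrow> 0 \<le> d x y" using gm unfolding is_gmetric_def by blast
  have z: "\<And>x y. x \<in> ?M \<Longrightarrow> y \<in> ?M \<Longrightarrow> d x y = 0 \<longleftrightarrow> x = y" using gm unfolding is_gmetric_def by blast
  have sy: "\<And>x y. x \<in> ?M \<Longrightarrow> y \<in> ?M \<Longrightarrow> d x y = d y x" using gm unfolding is_gmetric_def by blast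
  have tri: "\<And>x y z. x \<in> ?M \<Longrightarrow> y \<in> ?M \<Longrightarrow> z \<in> ?M \<Longrightarrow> d x y \<le> d x z + d z y"
    using gm unfolding is_gmetric_def by blast
  have nm: "\<And>r. 0 < r \<Longrightarrow> \<exists>\<delta>>0. \<not> lsim r (\<delta>::'g)" using no_min_class[OF G regular(1)] by blast
  have small: "\<And>u \<delta> r. 0 \<le> u \<Longrightarrow> u < \<delta> \<Longrightarrow> \<not> lsim r \<delta> \<Longrightarrow> \<not> lsim r u"
    by (rule small_lem)
  have big: "\<And>u r. \<not> lsim r u \<Longrightarrow> u < r" by (rule big_lem)
  have ult: "is_ultrametric ?M ArcBot arc_le arc_bot_elem (\<lambda>x y. lam (d x y))"
    unfolding is_ultrametric_def
  proof (intro conjI ballI)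
    fix x y assume xy: "x \<in> ?M" "y \<in> ?M"
    show "lam (d x y) \<in> ArcBot" using lam_in_ArcBot nn xy by blast
    show "lam (d x y) = lam (d y x)" using sy xy by simp
    have "lam (d x y) = arc_bot_elem \<longleftrightarrow> lam (d x y) = lam 0" by (simp add: lam_zero)
    also have "\<dots> \<longleftrightarrow> d x y = 0"
    proof
      assume "lam (d x y) = lam 0"
      then have "lsim (d x y) 0" using lam_eq_iff[OF nn[OF xy] order_refl] by blast
      then have "\<not> 0 < d x y" using lsim_pos by blast
      then show "d x y = 0" using nn[OF xy] by simp
    qed simp
    finally show "lam (d x y) = arc_bot_elem \<longleftrightarrow> x = y" using z xy by simp
  next
    fix x y w assume xyw: "x \<in> ?M" "y \<in> ?M" "w \<in> ?M"
    let ?a = "d x w" and ?b = "d w y" and ?c = "d x y"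
    have a: "0 \<le> ?a" and b: "0 \<le> ?b" and c: "0 \<le> ?c" using nn xyw by auto
    have "?a + ?b \<le> max ?a ?b + max ?a ?b" by (rule add_mono) auto
    then have "?c \<le> max ?a ?b + max ?a ?b" using tri[OF xyw(1,2,3)] by (rule order_trans[rotated])
    then have "?c \<le> gmul 2 (max ?a ?b)" by (simp add: numeral_2_eq_2)
    then have cm: "lsim ?c (max ?a ?b)" unfolding lsim_def by (intro exI[of _ 2]) simp
    have "lsim ?c ?a \<or> lsim ?c ?b" using cm by (cases "?a \<le> ?b") (auto simp: max_def)
    then have 1: "arc_le (lam ?c) (lam ?a) \<or> arc_le (lam ?c) (lam ?b)"
      using arc_le_lam a b c by blast
    show "arc_le (lam ?c) (omax arc_le (lam ?a) (lam ?b))"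
    proof (cases "lsim ?a ?b")
      case True
      then have "lsim ?c ?b" using \<open>lsim ?c ?a \<or> lsim ?c ?b\<close> lsim_trans by blast
      then show ?thesis unfolding omax_def using True arc_le_lam[OF a b] arc_le_lam[OF c b] by simp
    next
      case False
      then have "lsim ?b ?a" using lsim_total by blast
      then have "lsim ?c ?a" using \<open>lsim ?c ?a \<or> lsim ?c ?b\<close> lsim_trans by blast
      then show ?thesis unfolding omax_def using False arc_le_lam[OF a b] arc_le_lam[OF c a] by simp
    qed
  qed
  have sl: "strict arc_le (lam (d x y)) (lam v) \<longleftrightarrow> \<not> lsim v (d x y)"
    if "x \<in> ?M" "y \<in> ?M" "0 < v" for x y v
  proof -
    have "0 \<le> d x y" using nn that by blast
    moreover have "0 \<le> v" using that by simp
    ultimately show ?thesis by (rule strict_lam)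
  qed
  have A: "d x y < v" if "x \<in> ?M" "y \<in> ?M" "0 < v" "strict arc_le (lam (d x y)) (lam v)" for x y v
    using sl[OF that(1,2,3)] that(4) big_lem by blast
  have B: "strict arc_le (lam (d x y)) (lam v)"
    if "x \<in> ?M" "y \<in> ?M" "0 < v" "d x y < \<delta>" "\<not> lsim v \<delta>" for x y v \<delta>
  proof -
    have "0 \<le> d x y" using nn that by blast
    then have "\<not> lsim v (d x y)" using small_lem that(4,5) by blast
    then show ?thesis using sl[OF that(1,2,3)] by blast
  qed
  have gen: "generates_topology X (\<lambda>x r. {y\<in>?M. strict arc_le (lam (d x y)) r}) (ArcBot - {arc_bot_elem})"
    unfolding generates_topology_def
  proof (intro allI)
    fix U
    have eqv: "(\<exists>r\<in>{r. 0 < r}. {y\<in>?M. d x y < r} \<subseteq> U) \<longleftrightarrow>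
          (\<exists>r\<in>ArcBot - {arc_bot_elem}. {y\<in>?M. strict arc_le (lam (d x y)) r} \<subseteq> U)"
      if x: "x \<in> ?M" for x
    proof
      assume "\<exists>r\<in>{r. 0 < r}. {y\<in>?M. d x y < r} \<subseteq> U"
      then obtain r where r: "0 < r" "{y\<in>?M. d x y < r} \<subseteq> U" by blast
      obtain \<delta> where dl: "0 < \<delta>" "\<not> lsim r \<delta>" using nm r by blast
      have "{y\<in>?M. strict arc_le (lam (d x y)) (lam r)} \<subseteq> {y\<in>?M. d x y < r}"
      proof
        fix y assume "y \<in> {y\<in>?M. strict arc_le (lam (d x y)) (lam r)}"
        then have "y \<in> ?M" "strict arc_le (lam (d x y)) (lam r)" by auto
        moreover then have "d x y < r" by (rule A[OF x _ r(1)])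
        ultimately show "y \<in> {y\<in>?M. d x y < r}" by simp
      qed
      then show "\<exists>r\<in>ArcBot - {arc_bot_elem}. {y\<in>?M. strict arc_le (lam (d x y)) r} \<subseteq> U"
        using r(2) lam_in_ArcBot_pos[OF r(1)] by blast
    next
      assume "\<exists>r\<in>ArcBot - {arc_bot_elem}. {y\<in>?M. strict arc_le (lam (d x y)) r} \<subseteq> U"
      then obtain \<rho> where \<rho>: "\<rho> \<in> ArcBot - {arc_bot_elem}" "{y\<in>?M. strict arc_le (lam (d x y)) \<rho>} \<subseteq> U"
        by blast
      obtain v where v0: "0 < v" "\<rho> = lam v" using ArcBot_lam_pos[OF \<rho>(1)] by blast
      have v: "0 < v" "{y\<in>?M. strict arc_le (lam (d x y)) (lam v)} \<subseteq> U" using v0 \<rho>(2) by auto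
      obtain \<delta> where dl: "0 < \<delta>" "\<not> lsim v \<delta>" using nm v by blast
      have "{y\<in>?M. d x y < \<delta>} \<subseteq> {y\<in>?M. strict arc_le (lam (d x y)) (lam v)}"
      proof
        fix y assume "y \<in> {y\<in>?M. d x y < \<delta>}"
        then have "y \<in> ?M" "d x y < \<delta>" by auto
        moreover then have "strict arc_le (lam (d x y)) (lam v)" using B[OF x _ v(1) _ dl(2)] by blast
        ultimately show "y \<in> {y\<in>?M. strict arc_le (lam (d x y)) (lam v)}" by simp
      qed
      then show "\<exists>r\<in>{r. 0 < r}. {y\<in>?M. d x y < r} \<subseteq> U" using v dl by blast
    qed
    then show "openin X U \<longleftrightarrow> U \<subseteq> ?M \<and> (\<forall>x\<in>U. \<exists>r\<in>ArcBot - {arc_bot_elem}.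
        {y\<in>?M. strict arc_le (lam (d x y)) r} \<subseteq> U)"
    proof -
      have g: "openin X U \<longleftrightarrow> U \<subseteq> ?M \<and> (\<forall>x\<in>U. \<exists>r\<in>{r. 0 < r}. {y\<in>?M. d x y < r} \<subseteq> U)"
        using gt unfolding generates_topology_def by (rule spec)
      have "U \<subseteq> ?M \<and> (\<forall>x\<in>U. \<exists>r\<in>{r. 0 < r}. {y\<in>?M. d x y < r} \<subseteq> U) \<longleftrightarrow>
            U \<subseteq> ?M \<and> (\<forall>x\<in>U. \<exists>r\<in>ArcBot - {arc_bot_elem}. {y\<in>?M. strict arc_le (lam (d x y)) r} \<subseteq> U)"
      proof (cases "U \<subseteq> ?M")
        case True
        then have "(\<exists>r\<in>{r. 0 < r}. {y\<in>?M. d x y < r} \<subseteq> U) \<longleftrightarrow>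
          (\<exists>r\<in>ArcBot - {arc_bot_elem}. {y\<in>?M. strict arc_le (lam (d x y)) r} \<subseteq> U)" if "x \<in> U" for x
          using that True eqv[of x] by blast
        then show ?thesis using ball_cong[OF refl, of U] True by simp
      qed simp
      with g show ?thesis by (rule trans)
    qed
  qed
  have ue: "unif_equiv_arc X d (\<lambda>x y. lam (d x y))"
    unfolding unif_equiv_arc_def
  proof (intro conjI ballI allI impI)
    fix \<epsilon> :: "'g set" assume "\<epsilon> \<in> ArcBot - {arc_bot_elem}"
    then obtain v where v: "0 < v" "\<epsilon> = lam v" using ArcBot_lam_pos[of \<epsilon>] by blast
    obtain \<delta> where dl: "0 < \<delta>" "\<not> lsim v \<delta>" using nm v by blast
    show "\<exists>\<delta>>0. \<forall>x\<in>?M. \<forall>y\<in>?M. d x y < \<delta> \<longrightarrow> strict arc_le (lam (d x y)) \<epsilon>"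
      using dl(1) v(2) B[OF _ _ v(1) _ dl(2)] by blast
  next
    fix \<epsilon> :: 'g assume e: "0 < \<epsilon>"
    show "\<exists>\<delta>\<in>ArcBot - {arc_bot_elem}. \<forall>x\<in>?M. \<forall>y\<in>?M. strict arc_le (lam (d x y)) \<delta> \<longrightarrow> d x y < \<epsilon>"
      using lam_in_ArcBot_pos[OF e] A[OF _ _ e] by blast
  qed
  have "(\<lambda>x y. lam (d x y)) \<in> Ult X ArcBot arc_le arc_bot_elem"
    unfolding Ult_def mem_Collect_eq using ult gen by (rule conjI)
  then show ?thesis using ue by (rule conjI)
qed

end
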